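(* Let $c>0$ be a constant. If $mp<c$ and $p\le1/2$, then for every $q\in[0,1]$, \[ \ell_1(\mathrm{Bin}(m,p),\mathrm{Bin}(m,q))\ge\frac{e^{-3c/2}}{2}\min\left(m|p-q|,1\right). \]
   Context: $m$ is a positive integer, $p\in[0,1]$, and $\ell_1(P,Q)=\sum_x|P(x)-Q(x)|$. *)

theory Defs
  imports "HOL-Probability.Probability"
begin

definition l1_dist :: "'a pmf \<Rightarrow> 'a pmf \<Rightarrow> real" where
  "l1_dist P Q = infsum (\<lambda>x. \<bar>pmf P x - pmf Q x\<bar>) UNIV"

end

theory Submission
  imports Defs
begin

lemma exp_bound_1p:
  fixes p :: real assumes "0 \<le> p" "p \<le> 1/2"
  shows "exp (-3*p/2) \<le> 1 - p"
proof -
  have e: "exp (3/4::real) \<ge> 2"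
    using exp_lower_Taylor_quadratic[of "3/4::real"] by (simp add: power2_eq_square)
  have e2: "exp (-3/4::real) \<le> 1/2"
    using e by (simp add: exp_minus field_simps)
  have cv0: "exp ((1 - 2*p) *\<^sub>R 0 + (2*p) *\<^sub>R (-3/4)) \<le> (1 - 2*p) * exp 0 + (2*p) * exp (-3/4::real)"
    by (rule convex_onD[OF exp_convex]) (use assms in auto)
  have cv: "exp ((1 - 2*p) * 0 + (2*p) * (-3/4)) \<le> (1 - 2*p) * exp 0 + (2*p) * exp (-3/4::real)"
    using cv0 by simp
  have "exp (-3*p/2) = exp ((1 - 2*p) * 0 + (2*p) * (-3/4))" by simp
  also have "\<dots> \<le> (1 - 2*p) + (2*p) * exp (-3/4::real)" using cv by simp
  also have "\<dots> \<le> (1 - 2*p) + (2*p) * (1/2)"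
    using e2 assms by (intro add_left_mono mult_left_mono) auto
  finally show ?thesis by simp
qed

lemma one_minus_exp_bound:
  fixes y :: real assumes "0 \<le> y"
  shows "min y 1 / 2 \<le> 1 - exp (-y)"
proof (cases "y \<le> 1")
  case True
  have "exp (-y) = 1 / exp y" by (simp add: exp_minus field_simps)
  also have "\<dots> \<le> 1 / (1 + y)"
    using assms exp_ge_add_one_self[of y] by (intro divide_left_mono) auto
  also have "\<dots> \<le> 1 - y/2"
  proof -
    have "0 \<le> y * (1 - y)" using assms True by simp
    hence "1 \<le> (1 - y/2) * (1 + y)" by (simp add: algebra_simps)
    thus ?thesis using assms by (simp add: pos_divide_le_eq)
  qed
  finally show ?thesis using True by simp
next
  case False
  have e: "exp (1::real) \<ge> 2" using exp_ge_add_one_self[of "1::real"] by simp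
  have "exp (-y) \<le> exp (-1)" using False by simp
  also have "\<dots> \<le> 1/2" using e by (simp add: exp_minus field_simps)
  finally show ?thesis using False by simp
qed

theorem lemma6:
  fixes c p q :: real and m :: nat
  assumes "c > 0" and "m > 0"
    and "0 \<le> p" and "p \<le> 1" and "0 \<le> q" and "q \<le> 1"
    and "real m * p < c" and "p \<le> 1/2"
  shows "l1_dist (binomial_pmf m p) (binomial_pmf m q)
           \<ge> exp (-3*c/2) / 2 * min (real m * \<bar>p - q\<bar>) 1"
proof -
  define f where "f x = \<bar>pmf (binomial_pmf m p) x - pmf (binomial_pmf m q) x\<bar>" for x
  have pP: "pmf (binomial_pmf m p) k = (m choose k) * p^k * (1 - p)^(m - k)" for k
    using assms by (simp add: pmf_binomial)
  have pQ: "pmf (binomial_pmf m q) k = (m choose k) * q^k * (1 - q)^(m - k)" for k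
    using assms by (simp add: pmf_binomial)
  have l1: "l1_dist (binomial_pmf m p) (binomial_pmf m q) = sum f {..m}"
  proof -
    have "l1_dist (binomial_pmf m p) (binomial_pmf m q) = infsum f UNIV"
      unfolding l1_dist_def f_def ..
    also have "\<dots> = infsum f {..m}"
      by (rule infsum_cong_neutral) (auto simp: f_def pP pQ)
    finally show ?thesis by simp
  qed
  have "f 0 \<le> sum f {..m}"
    by (rule member_le_sum) (auto simp: f_def)
  hence l1ge: "\<bar>(1-p)^m - (1-q)^m\<bar> \<le> l1_dist (binomial_pmf m p) (binomial_pmf m q)"
    using l1 by (simp add: f_def pP pQ)
  define a where "a = (1-p)^m"
  define E where "E = exp (-3*c/2)"
  have "E \<le> exp (-3*p/2) ^ m"
    unfolding E_def exp_of_nat_mult[symmetric] using assms by (simp add: mult.commute)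
  also have "\<dots> \<le> a" unfolding a_def
    using exp_bound_1p[of p] assms by (intro power_mono) auto
  finally have aE: "E \<le> a" .
  have Epos: "0 < E" unfolding E_def by simp
  define M where "M = min (real m * \<bar>p - q\<bar>) 1"
  have M0: "0 \<le> M" unfolding M_def by simp
  have key: "a * (M/2) \<le> \<bar>(1-p)^m - (1-q)^m\<bar>"
  proof (cases "p \<le> q")
    case True
    define t where "t = (q - p) / (1 - p)"
    have p1: "0 < 1 - p" using assms by simp
    have "(q-p)*(1-p) \<le> (q-p)" using True assms by (simp add: mult_left_le)
    hence t1: "q - p \<le> t" unfolding t_def using p1 by (simp add: pos_le_divide_eq)
    have t2: "t \<le> 1" unfolding t_def using p1 assms by (simp add: pos_divide_le_eq)
    have t0: "0 \<le> t" unfolding t_def using p1 True by simp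
    have eq: "1 - q = (1 - p) * (1 - t)" using assms by (simp add: t_def field_simps)
    have "(1-q)^m = a * (1-t)^m" by (simp add: eq a_def power_mult_distrib)
    also have "\<dots> \<le> a * (1 - (q-p))^m"
    proof -
      have "(1-t)^m \<le> (1 - (q-p))^m" using t1 t2 by (intro power_mono) auto
      moreover have "0 \<le> a" unfolding a_def using assms by simp
      ultimately show ?thesis by (rule mult_left_mono)
    qed
    also have "\<dots> \<le> a * exp (-(q-p))^m"
    proof -
      have ee: "1 - (q-p) \<le> exp (-(q-p))" using exp_ge_add_one_self[of "-(q-p)"] by linarith
      have e0: "0 \<le> 1 - (q-p)" using assms by linarith
      have "(1 - (q-p))^m \<le> exp (-(q-p))^m" using ee e0 by (rule power_mono)
      moreover have "0 \<le> a" unfolding a_def using assms by simp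
      ultimately show ?thesis by (rule mult_left_mono)
    qed
    also have "\<dots> = a * exp (- (real m * \<bar>p - q\<bar>))"
      using True by (simp add: exp_of_nat_mult[symmetric] algebra_simps)
    finally have h: "(1-q)^m \<le> a * exp (- (real m * \<bar>p - q\<bar>))" .
    have "M/2 \<le> 1 - exp (- (real m * \<bar>p - q\<bar>))"
      unfolding M_def by (rule one_minus_exp_bound) simp
    hence "a * (M/2) \<le> a * (1 - exp (- (real m * \<bar>p - q\<bar>)))"
      using assms unfolding a_def by (intro mult_left_mono) auto
    also have "\<dots> \<le> (1-p)^m - (1-q)^m" using h by (simp add: a_def algebra_simps)
    finally show ?thesis by linarith
  next
    case False
    define s where "s = (p - q) / (1 - p)"
    have p1: "0 < 1 - p" using assms by simp
    have "(p-q)*(1-p) \<le> (p-q)" using False assms by (simp add: mult_left_le)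
    hence s1: "p - q \<le> s" unfolding s_def using p1 by (simp add: pos_le_divide_eq)
    have s0: "0 \<le> s" unfolding s_def using p1 False by simp
    have eq: "1 - q = (1 - p) * (1 + s)" using assms by (simp add: s_def field_simps)
    have "1 + real m * s \<le> (1 + s)^m" using s0 by (intro Bernoulli_inequality) simp
    hence "a * (real m * s) \<le> a * ((1+s)^m - 1)"
      using assms unfolding a_def by (intro mult_left_mono) auto
    also have "\<dots> = (1-q)^m - (1-p)^m"
    proof -
      have "(1-q)^m = a * (1+s)^m" unfolding eq a_def by (rule power_mult_distrib)
      thus ?thesis unfolding a_def by (simp add: right_diff_distrib)
    qed
    finally have h: "a * (real m * s) \<le> (1-q)^m - (1-p)^m" .
    have "real m * (p - q) \<le> real m * s" using s1 by (intro mult_left_mono) auto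
    moreover have "M \<le> real m * (p - q)" unfolding M_def using False by simp
    moreover have "0 \<le> M" by (rule M0)
    ultimately have "M/2 \<le> real m * s" by linarith
    hence "a * (M/2) \<le> a * (real m * s)"
      using assms unfolding a_def by (intro mult_left_mono) auto
    with h show ?thesis by linarith
  qed
  have "E / 2 * M \<le> a * (M/2)" using aE M0 by (simp add: mult_right_mono)
  with key l1ge show ?thesis unfolding E_def M_def by simp
qed

end
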